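(* Let $\{A_n\}_{n\geqslant 1}$ be i.i.d. nonnegative random variables with Laplace–Stieltjes transform $\alpha(s)=\mathbb{E}[e^{-sA_1}]$, and let $\{B_n\}_{n\geqslant 1}$ be i.i.d. exponentially distributed with rate $\mu>0$, independent of $\{A_n\}$. Let $W_1\geqslant 0$ be independent of $\{A_n\},\{B_n\}$, and let $W_{n+1}=\max\{0,\,B_{n+1}-A_n-W_n\}$ for $n\geqslant 1$. Suppose the process $\{W_n\}_{n\geqslant1}$ is stationary (equivalently, $\mathbb{P}[W_1>0]=2\alpha(\mu)/(2+\alpha(\mu))$ and, given $W_1>0$, $W_1$ is exponentially distributed with rate $\mu$). Then for every $k\geqslant 1$, $$\operatorname{cov}[W_1,W_{1+k}]=\frac{2\alpha(\mu)}{2+\alpha(\mu)}\left(\frac32-\frac{2\alpha(\mu)}{2+\alpha(\mu)}\right)\frac{1}{\mu^2}\left(-\frac{\alpha(\mu)}{2}\right)^{k}.$$ *)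

theory Defs
  imports "HOL-Probability.Probability"
begin

text \<open>The recursion W_1 given, W_(n+1) = max 0 (B_(n+1) - A_n - W_n) for n >= 1.
  Index 0 is unused (set to 0); all indices of interest are >= 1.\<close>
fun Wseq :: "(nat \<Rightarrow> 'a \<Rightarrow> real) \<Rightarrow> (nat \<Rightarrow> 'a \<Rightarrow> real) \<Rightarrow> ('a \<Rightarrow> real) \<Rightarrow> nat \<Rightarrow> 'a \<Rightarrow> real" where
  "Wseq A B W1 0 = (\<lambda>_. 0)"
| "Wseq A B W1 (Suc 0) = W1"
| "Wseq A B W1 (Suc (Suc n)) =
     (\<lambda>\<omega>. max 0 (B (Suc (Suc n)) \<omega> - A (Suc n) \<omega> - Wseq A B W1 (Suc n) \<omega>))"

definition covariance :: "'a measure \<Rightarrow> ('a \<Rightarrow> real) \<Rightarrow> ('a \<Rightarrow> real) \<Rightarrow> real" where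
  "covariance M X Y =
     (\<integral>\<omega>. (X \<omega> - (\<integral>x. X x \<partial>M)) * (Y \<omega> - (\<integral>x. Y x \<partial>M)) \<partial>M)"

definition stationary_process :: "'a measure \<Rightarrow> (nat \<Rightarrow> 'a \<Rightarrow> real) \<Rightarrow> bool" where
  "stationary_process M X \<longleftrightarrow>
     (\<forall>m::nat. \<forall>J. finite J \<and> J \<subseteq> {1..} \<longrightarrow>
        distr M (PiM J (\<lambda>_. borel)) (\<lambda>\<omega>. \<lambda>i\<in>J. X (i + m) \<omega>)
      = distr M (PiM J (\<lambda>_. borel)) (\<lambda>\<omega>. \<lambda>i\<in>J. X i \<omega>))"

definition driving_family ::
  "(nat \<Rightarrow> 'a \<Rightarrow> real) \<Rightarrow> (nat \<Rightarrow> 'a \<Rightarrow> real) \<Rightarrow> ('a \<Rightarrow> real) \<Rightarrow> nat + nat + unit \<Rightarrow> 'a \<Rightarrow> real" where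
  "driving_family A B W1 i = (case i of Inl n \<Rightarrow> A n | Inr (Inl n) \<Rightarrow> B n | Inr (Inr _) \<Rightarrow> W1)"

definition driving_index :: "(nat + nat + unit) set" where
  "driving_index = Inl ` {1..} \<union> Inr ` Inl ` {1..} \<union> {Inr (Inr ())}"

end

theory Submission
  imports Defs "HOL-Real_Asymp.Real_Asymp"
begin


fun WF :: "nat \<Rightarrow> (nat + nat + unit \<Rightarrow> real) \<Rightarrow> real" where
  "WF 0 f = 0"
| "WF (Suc 0) f = f (Inr (Inr ()))"
| "WF (Suc (Suc n)) f = max 0 (f (Inr (Inl (Suc (Suc n)))) - f (Inl (Suc n)) - WF (Suc n) f)"

lemma Wseq_WF: "Wseq A B W1 m \<omega> = WF m (\<lambda>i. driving_family A B W1 i \<omega>)"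
  by (induction m rule: induct_nat_012) (auto simp: driving_family_def)

lemma WF_cong:
  assumes "\<And>n. 1 \<le> n \<Longrightarrow> n < m \<Longrightarrow> f (Inl n) = g (Inl n)"
    and "\<And>n. 2 \<le> n \<Longrightarrow> n \<le> m \<Longrightarrow> f (Inr (Inl n)) = g (Inr (Inl n))"
    and "1 \<le> m \<Longrightarrow> f (Inr (Inr ())) = g (Inr (Inr ()))"
  shows "WF m f = WF m g"
  using assms
proof (induction m rule: induct_nat_012)
  case (ge2 n)
  have "WF (Suc n) f = WF (Suc n) g" using ge2 by (intro ge2(2)) auto
  moreover have "f (Inr (Inl (Suc (Suc n)))) = g (Inr (Inl (Suc (Suc n))))" using ge2 by auto
  moreover have "f (Inl (Suc n)) = g (Inl (Suc n))" using ge2 by auto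
  ultimately show ?case by simp
qed auto

lemma comp_meas: "(\<lambda>f. f i) \<in> borel_measurable (PiM K (\<lambda>_. (borel::real measure)))"
proof (cases "i \<in> K")
  case True then show ?thesis by (rule measurable_component_singleton)
next
  case False
  have "(\<lambda>f. f i) \<in> borel_measurable (PiM K (\<lambda>_. (borel::real measure))) \<longleftrightarrow>
        (\<lambda>f. undefined::real) \<in> borel_measurable (PiM K (\<lambda>_. (borel::real measure)))"
    by (rule measurable_cong) (use False in \<open>auto simp: space_PiM PiE_def extensional_def\<close>)
  then show ?thesis by simp
qed

lemma WF_meas: "WF m \<in> borel_measurable (PiM K (\<lambda>_. (borel::real measure)))"
proof (induction m rule: induct_nat_012)
  case 0 then show ?case by simp
next
  case 1 then show ?case using comp_meas by simp
next
  case (ge2 n)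
  have e: "WF (Suc (Suc n)) = (\<lambda>f. max 0 (f (Inr (Inl (Suc (Suc n)))) - f (Inl (Suc n)) - WF (Suc n) f))"
    by (rule ext) simp
  show ?case unfolding e using ge2 comp_meas by measurable
qed

context prob_space begin

lemma GI:
  assumes ind: "indep_var N Z N' V" and F: "F \<in> borel_measurable (N \<Otimes>\<^sub>M N')"
  shows "(\<integral>\<^sup>+\<omega>. F (Z \<omega>, V \<omega>) \<partial>M) = (\<integral>\<^sup>+\<omega>. (\<integral>\<^sup>+v. F (Z \<omega>, v) \<partial>distr M N' V) \<partial>M)"
proof -
  have Z: "random_variable N Z" and V: "random_variable N' V"
    and eq: "distr M N Z \<Otimes>\<^sub>M distr M N' V = distr M (N \<Otimes>\<^sub>M N') (\<lambda>x. (Z x, V x))"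
    using ind unfolding indep_var_distribution_eq by auto
  interpret V': prob_space "distr M N' V" using V by (rule prob_space_distr)
  have sf: "sigma_finite_measure (distr M N' V)" by unfold_locales
  have "(\<integral>\<^sup>+\<omega>. F (Z \<omega>, V \<omega>) \<partial>M) = integral\<^sup>N (distr M (N \<Otimes>\<^sub>M N') (\<lambda>x. (Z x, V x))) F"
    using Z V F by (subst nn_integral_distr) auto
  also have "\<dots> = integral\<^sup>N (distr M N Z \<Otimes>\<^sub>M distr M N' V) F" by (simp add: eq)
  also have "\<dots> = (\<integral>\<^sup>+z. \<integral>\<^sup>+v. F (z, v) \<partial>distr M N' V \<partial>distr M N Z)"
    using F by (subst V'.nn_integral_fst) (auto cong: measurable_cong_sets)
  also have "\<dots> = (\<integral>\<^sup>+\<omega>. (\<integral>\<^sup>+v. F (Z \<omega>, v) \<partial>distr M N' V) \<partial>M)"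
    using Z F by (subst nn_integral_distr) (auto intro!: V'.borel_measurable_nn_integral_fst[where f=F] cong: measurable_cong_sets)
  finally show ?thesis .
qed

end



lemma L1:
  fixes \<mu> c :: real assumes mu: "\<mu> > 0" and c: "c \<ge> 0"
  shows "(\<integral>\<^sup>+b. ennreal (exponential_density \<mu> b) * ennreal (max 0 (b - c)) \<partial>lborel) = ennreal (exp (- \<mu> * c) / \<mu>)"
proof -
  have "(\<integral>\<^sup>+b. ennreal (exponential_density \<mu> b) * ennreal (max 0 (b - c)) \<partial>lborel)
      = (\<integral>\<^sup>+b. ennreal (\<mu> * (b - c) * exp (- b * \<mu>)) * indicator {c..} b \<partial>lborel)"
  proof (intro nn_integral_cong)
    fix b show "ennreal (exponential_density \<mu> b) * ennreal (max 0 (b - c)) = ennreal (\<mu> * (b - c) * exp (- b * \<mu>)) * indicator {c..} b"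
    proof (cases "b \<ge> c")
      case True
      then show ?thesis using c mu by (simp add: ennreal_mult[symmetric] exponential_density_def mult_ac)
    qed auto
  qed
  also have "\<dots> = ennreal (0 - (- (c - c + 1 / \<mu>) * exp (- c * \<mu>)))"
  proof (rule nn_integral_FTC_atLeast[where F="\<lambda>b. - (b - c + 1 / \<mu>) * exp (- b * \<mu>)"])
    show "((\<lambda>b. - (b - c + 1 / \<mu>) * exp (- b * \<mu>)) \<longlongrightarrow> 0) at_top"
      using mu by real_asymp
  next
    fix x assume "c \<le> x"
    then show "0 \<le> \<mu> * (x - c) * exp (- x * \<mu>)" using mu by simp
  next
    fix x
    show "((\<lambda>b. - (b - c + 1 / \<mu>) * exp (- b * \<mu>)) has_real_derivative \<mu> * (x - c) * exp (- x * \<mu>)) (at x)"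
      using mu by (auto intro!: derivative_eq_intros simp: field_simps)
  qed measurable
  also have "\<dots> = ennreal (exp (- \<mu> * c) / \<mu>)" by (simp add: mult.commute)
  finally show ?thesis .
qed

lemma L3:
  fixes \<mu> c :: real assumes mu: "\<mu> > 0" and c: "c \<ge> 0"
  shows "(\<integral>\<^sup>+b. ennreal (exponential_density \<mu> b) * ennreal (max 0 (b - c) * exp (- \<mu> * max 0 (b - c))) \<partial>lborel) = ennreal (exp (- \<mu> * c) / (4 * \<mu>))"
proof -
  have e: "exp (- b * \<mu>) * exp (- \<mu> * (b - c)) = exp (\<mu> * c) * exp (- (2 * \<mu> * b))" for b
    by (simp add: exp_add[symmetric] algebra_simps)
  have "(\<integral>\<^sup>+b. ennreal (exponential_density \<mu> b) * ennreal (max 0 (b - c) * exp (- \<mu> * max 0 (b - c))) \<partial>lborel)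
      = (\<integral>\<^sup>+b. ennreal (\<mu> * (b - c) * exp (\<mu> * c) * exp (- (2 * \<mu> * b))) * indicator {c..} b \<partial>lborel)"
  proof (intro nn_integral_cong)
    fix b show "ennreal (exponential_density \<mu> b) * ennreal (max 0 (b - c) * exp (- \<mu> * max 0 (b - c))) =
         ennreal (\<mu> * (b - c) * exp (\<mu> * c) * exp (- (2 * \<mu> * b))) * indicator {c..} b"
    proof (cases "b \<ge> c")
      case True
      then have "exponential_density \<mu> b * (max 0 (b - c) * exp (- \<mu> * max 0 (b - c)))
         = \<mu> * (b - c) * (exp (- b * \<mu>) * exp (- \<mu> * (b - c)))" using c by (simp add: exponential_density_def)
      also have "\<dots> = \<mu> * (b - c) * exp (\<mu> * c) * exp (- (2 * \<mu> * b))" by (simp only: e mult.assoc)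
      finally show ?thesis using True c mu by (simp add: ennreal_mult[symmetric] exponential_density_nonneg)
    qed auto
  qed
  also have "\<dots> = ennreal (0 - (- exp (\<mu> * c) * ((c - c) / 2 + 1 / (4 * \<mu>)) * exp (- (2 * \<mu> * c))))"
  proof (rule nn_integral_FTC_atLeast[where F="\<lambda>b. - exp (\<mu> * c) * ((b - c) / 2 + 1 / (4 * \<mu>)) * exp (- (2 * \<mu> * b))"])
    show "((\<lambda>b. - exp (\<mu> * c) * ((b - c) / 2 + 1 / (4 * \<mu>)) * exp (- (2 * \<mu> * b))) \<longlongrightarrow> 0) at_top"
      using mu by real_asymp
  next
    fix x assume "c \<le> x"
    then show "0 \<le> \<mu> * (x - c) * exp (\<mu> * c) * exp (- (2 * \<mu> * x))" using mu by simp
  next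
    fix x
    show "((\<lambda>b. - exp (\<mu> * c) * ((b - c) / 2 + 1 / (4 * \<mu>)) * exp (- (2 * \<mu> * b))) has_real_derivative \<mu> * (x - c) * exp (\<mu> * c) * exp (- (2 * \<mu> * x))) (at x)"
      using mu by (auto intro!: derivative_eq_intros simp: field_simps)
  qed measurable
  also have "\<dots> = ennreal (exp (- \<mu> * c) / (4 * \<mu>))"
  proof -
    have "exp (\<mu> * c) * exp (- (2 * \<mu> * c)) = exp (- \<mu> * c)" by (simp add: exp_add[symmetric] algebra_simps)
    then show ?thesis by (simp add: field_simps)
  qed
  finally show ?thesis .
qed

lemma L2:
  fixes \<mu> c :: real assumes mu: "\<mu> > 0" and c: "c \<ge> 0"
  shows "(\<integral>\<^sup>+b. ennreal (exponential_density \<mu> b) * ennreal (exp (- \<mu> * max 0 (b - c))) \<partial>lborel) + ennreal (exp (- \<mu> * c) / 2) = 1"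
proof -
  define X where "X = (\<integral>\<^sup>+b. ennreal (exponential_density \<mu> b) * indicator {..<c} b \<partial>lborel)"
  have e: "exp (- b * \<mu>) * exp (- \<mu> * (b - c)) = exp (\<mu> * c) * exp (- (2 * \<mu> * b))" for b
    by (simp add: exp_add[symmetric] algebra_simps)
  have tail: "(\<integral>\<^sup>+b. ennreal (exponential_density \<mu> b) * indicator {c..} b \<partial>lborel) = ennreal (exp (- \<mu> * c))"
  proof -
    have "(\<integral>\<^sup>+b. ennreal (exponential_density \<mu> b) * indicator {c..} b \<partial>lborel)
        = (\<integral>\<^sup>+b. ennreal (\<mu> * exp (- b * \<mu>)) * indicator {c..} b \<partial>lborel)"
      using c by (intro nn_integral_cong) (auto simp: exponential_density_def split: split_indicator)
    also have "\<dots> = ennreal (0 - (- exp (- c * \<mu>)))"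
    proof (rule nn_integral_FTC_atLeast)
      show "((\<lambda>b. - exp (- b * \<mu>)) \<longlongrightarrow> 0) at_top" using mu by real_asymp
    qed (use mu in \<open>auto intro!: derivative_eq_intros\<close>)
    finally show ?thesis by (simp add: mult.commute)
  qed
  have total: "(\<integral>\<^sup>+b. ennreal (exponential_density \<mu> b) \<partial>lborel) = 1"
  proof -
    interpret P: prob_space "density lborel (exponential_density \<mu>)"
      by (rule prob_space_exponential_density[OF mu])
    have "emeasure (density lborel (exponential_density \<mu>)) UNIV = 1"
      using P.emeasure_space_1 by simp
    then show ?thesis by (simp add: emeasure_density)
  qed
  have "X + ennreal (exp (- \<mu> * c)) = 1"
  proof -
    have "X + ennreal (exp (- \<mu> * c)) = (\<integral>\<^sup>+b. ennreal (exponential_density \<mu> b) * indicator {..<c} b + ennreal (exponential_density \<mu> b) * indicator {c..} b \<partial>lborel)"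
      unfolding X_def tail[symmetric] by (subst nn_integral_add) auto
    also have "\<dots> = (\<integral>\<^sup>+b. ennreal (exponential_density \<mu> b) \<partial>lborel)"
      by (intro nn_integral_cong) (auto split: split_indicator)
    finally show ?thesis using total by simp
  qed
  have half: "(\<integral>\<^sup>+b. ennreal (\<mu> * exp (\<mu> * c) * exp (- (2 * \<mu> * b))) * indicator {c..} b \<partial>lborel) = ennreal (exp (- \<mu> * c) / 2)"
  proof -
    have "(\<integral>\<^sup>+b. ennreal (\<mu> * exp (\<mu> * c) * exp (- (2 * \<mu> * b))) * indicator {c..} b \<partial>lborel)
       = ennreal (0 - (- exp (\<mu> * c) * exp (- (2 * \<mu> * c)) / 2))"
    proof (rule nn_integral_FTC_atLeast[where F="\<lambda>b. - exp (\<mu> * c) * exp (- (2 * \<mu> * b)) / 2"])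
      show "((\<lambda>b. - exp (\<mu> * c) * exp (- (2 * \<mu> * b)) / 2) \<longlongrightarrow> 0) at_top" using mu by real_asymp
    next
      fix x show "((\<lambda>b. - exp (\<mu> * c) * exp (- (2 * \<mu> * b)) / 2) has_real_derivative \<mu> * exp (\<mu> * c) * exp (- (2 * \<mu> * x))) (at x)"
        by (auto intro!: derivative_eq_intros simp: field_simps)
    qed (use mu in auto)
    also have "\<dots> = ennreal (exp (- \<mu> * c) / 2)"
    proof -
      have "exp (\<mu> * c) * exp (- (2 * \<mu> * c)) = exp (- \<mu> * c)" by (simp add: exp_add[symmetric] algebra_simps)
      then show ?thesis by simp
    qed
    finally show ?thesis .
  qed
  have "(\<integral>\<^sup>+b. ennreal (exponential_density \<mu> b) * ennreal (exp (- \<mu> * max 0 (b - c))) \<partial>lborel)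
      = (\<integral>\<^sup>+b. ennreal (exponential_density \<mu> b) * indicator {..<c} b + ennreal (\<mu> * exp (\<mu> * c) * exp (- (2 * \<mu> * b))) * indicator {c..} b \<partial>lborel)"
  proof (intro nn_integral_cong)
    fix b show "ennreal (exponential_density \<mu> b) * ennreal (exp (- \<mu> * max 0 (b - c))) =
      ennreal (exponential_density \<mu> b) * indicator {..<c} b + ennreal (\<mu> * exp (\<mu> * c) * exp (- (2 * \<mu> * b))) * indicator {c..} b"
    proof (cases "b \<ge> c")
      case True
      then have "exponential_density \<mu> b * exp (- \<mu> * max 0 (b - c))
         = \<mu> * (exp (- b * \<mu>) * exp (- \<mu> * (b - c)))" using c by (simp add: exponential_density_def)
      also have "\<dots> = \<mu> * exp (\<mu> * c) * exp (- (2 * \<mu> * b))" by (simp only: e mult.assoc)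
      finally show ?thesis using True c mu by (simp add: ennreal_mult[symmetric] exponential_density_nonneg)
    qed auto
  qed
  also have "\<dots> = X + ennreal (exp (- \<mu> * c) / 2)"
    unfolding X_def half[symmetric] by (subst nn_integral_add) auto
  finally have "(\<integral>\<^sup>+b. ennreal (exponential_density \<mu> b) * ennreal (exp (- \<mu> * max 0 (b - c))) \<partial>lborel) + ennreal (exp (- \<mu> * c) / 2)
     = X + (ennreal (exp (- \<mu> * c) / 2) + ennreal (exp (- \<mu> * c) / 2))" by (simp add: add.assoc)
  also have "ennreal (exp (- \<mu> * c) / 2) + ennreal (exp (- \<mu> * c) / 2) = ennreal (exp (- \<mu> * c))"
    by (simp add: ennreal_plus[symmetric] del: ennreal_plus)
  finally show ?thesis using \<open>X + ennreal (exp (- \<mu> * c)) = 1\<close> by simp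
qed




locale setting = prob_space M for M :: "'a measure" +
  fixes A B :: "nat \<Rightarrow> 'a \<Rightarrow> real" and W1 :: "'a \<Rightarrow> real" and \<mu> :: real
  assumes mu: "\<mu> > 0"
    and A_rv: "\<And>n. n \<ge> 1 \<Longrightarrow> A n \<in> borel_measurable M"
    and A_nonneg: "\<And>n. n \<ge> 1 \<Longrightarrow> AE \<omega> in M. A n \<omega> \<ge> 0"
    and A_ident: "\<And>n. n \<ge> 1 \<Longrightarrow> distr M borel (A n) = distr M borel (A 1)"
    and B_exp: "\<And>n. n \<ge> 1 \<Longrightarrow> distributed M lborel (B n) (exponential_density \<mu>)"
    and W1_rv: "W1 \<in> borel_measurable M"
    and W1_nonneg: "AE \<omega> in M. W1 \<omega> \<ge> 0"
    and indep: "indep_vars (\<lambda>_. borel) (driving_family A B W1) driving_index"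
    and stat: "stationary_process M (Wseq A B W1)"
begin

abbreviation "W \<equiv> Wseq A B W1"

lemma B_rv: "n \<ge> 1 \<Longrightarrow> B n \<in> borel_measurable M"
  using distributed_measurable[OF B_exp] by (simp add: measurable_lborel2)

lemma W_meas: "W m \<in> borel_measurable M"
proof (induction m rule: induct_nat_012)
  case (ge2 n)
  have e: "W (Suc (Suc n)) = (\<lambda>\<omega>. max 0 (B (Suc (Suc n)) \<omega> - A (Suc n) \<omega> - W (Suc n) \<omega>))"
    by (rule ext) simp
  show ?case unfolding e using ge2 B_rv[of "Suc (Suc n)"] A_rv[of "Suc n"] by measurable
qed (auto simp: W1_rv)

lemma W_nonneg: "m \<ge> 1 \<Longrightarrow> AE \<omega> in M. W m \<omega> \<ge> 0"
proof (cases m)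
  case (Suc n) then show ?thesis using W1_nonneg by (cases n) auto
qed simp

lemma indep_K:
  assumes j: "j \<in> driving_index"
  shows "indep_var (PiM (driving_index - {j}) (\<lambda>_. (borel :: real measure)))
           (\<lambda>\<omega>. restrict (\<lambda>i. driving_family A B W1 i \<omega>) (driving_index - {j}))
           (PiM {j} (\<lambda>_. (borel :: real measure))) (\<lambda>\<omega>. restrict (\<lambda>i. driving_family A B W1 i \<omega>) {j})"
  by (rule indep_var_restrict[OF indep]) (use j in auto)

lemma DF_meas: "i \<in> driving_index \<Longrightarrow> driving_family A B W1 i \<in> borel_measurable M"
  using indep unfolding indep_vars_def by auto

lemma inner_conv:
  assumes j: "j \<in> driving_index" and G: "G \<in> borel_measurable borel"
  shows "(\<integral>\<^sup>+v. G (v j) \<partial>distr M (PiM {j} (\<lambda>_. (borel :: real measure))) (\<lambda>\<omega>. restrict (\<lambda>i. driving_family A B W1 i \<omega>) {j}))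
       = (\<integral>\<^sup>+v. G v \<partial>distr M borel (driving_family A B W1 j))"
proof -
  have "(\<integral>\<^sup>+v. G (v j) \<partial>distr M (PiM {j} (\<lambda>_. (borel :: real measure))) (\<lambda>\<omega>. restrict (\<lambda>i. driving_family A B W1 i \<omega>) {j}))
       = (\<integral>\<^sup>+\<omega>. G (driving_family A B W1 j \<omega>) \<partial>M)"
    using DF_meas[OF j] G by (subst nn_integral_distr) (auto intro!: measurable_restrict)
  also have "\<dots> = (\<integral>\<^sup>+v. G v \<partial>distr M borel (driving_family A B W1 j))"
    using DF_meas[OF j] G by (subst nn_integral_distr) auto
  finally show ?thesis .
qed

lemma distr_B_density:
  assumes n: "n \<ge> 1" and G: "G \<in> borel_measurable borel"
  shows "(\<integral>\<^sup>+v. G v \<partial>distr M borel (B n)) = (\<integral>\<^sup>+v. ennreal (exponential_density \<mu> v) * G v \<partial>lborel)"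
proof -
  have D: "distributed M lborel (B n) (exponential_density \<mu>)" using B_exp n .
  have "(\<integral>\<^sup>+v. G v \<partial>distr M borel (B n)) = (\<integral>\<^sup>+\<omega>. G (B n \<omega>) \<partial>M)"
    using B_rv[OF n] G by (subst nn_integral_distr) auto
  also have "\<dots> = (\<integral>\<^sup>+v. G v \<partial>distr M lborel (B n))"
    using distributed_measurable[OF D] G by (subst nn_integral_distr) (auto simp: measurable_lborel1)
  also have "\<dots> = (\<integral>\<^sup>+v. G v \<partial>density lborel (exponential_density \<mu>))"
    by (simp add: distributed_distr_eq_density[OF D])
  also have "\<dots> = (\<integral>\<^sup>+v. ennreal (exponential_density \<mu> v) * G v \<partial>lborel)"
    using distributed_borel_measurable[OF D] G by (subst nn_integral_density) (auto simp: measurable_lborel1)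
  finally show ?thesis .
qed

end



context setting begin

lemma R_facts:
  assumes m: "m \<ge> 1" and K: "K = driving_index - {j}" and jm: "j \<noteq> Inr (Inr ())"
    and jA: "\<And>n. n < m \<Longrightarrow> j \<noteq> Inl n" and jB: "\<And>n. n \<le> m \<Longrightarrow> j \<noteq> Inr (Inl n)"
  shows "restrict (\<lambda>i. driving_family A B W1 i \<omega>) K (Inr (Inr ())) = W1 \<omega>"
    and "WF m (restrict (\<lambda>i. driving_family A B W1 i \<omega>) K) = W m \<omega>"
proof -
  show "restrict (\<lambda>i. driving_family A B W1 i \<omega>) K (Inr (Inr ())) = W1 \<omega>"
    using K jm by (auto simp: driving_index_def driving_family_def)
  have "WF m (restrict (\<lambda>i. driving_family A B W1 i \<omega>) K) = WF m (\<lambda>i. driving_family A B W1 i \<omega>)"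
    by (rule WF_cong) (use K jm jA jB in \<open>auto simp: driving_index_def\<close>)
  then show "WF m (restrict (\<lambda>i. driving_family A B W1 i \<omega>) K) = W m \<omega>"
    by (simp add: Wseq_WF)
qed

lemma stepB:
  assumes m: "m \<ge> 1" and \<psi>[measurable]: "\<psi> \<in> borel_measurable borel" and \<phi>[measurable]: "\<phi> \<in> borel_measurable borel"
    and \<psi>0: "\<And>x. \<psi> x \<ge> 0" and \<phi>0: "\<And>x. \<phi> x \<ge> 0"
  shows "(\<integral>\<^sup>+\<omega>. ennreal (\<psi> (W1 \<omega>) * \<phi> (W (Suc m) \<omega>)) \<partial>M)
       = (\<integral>\<^sup>+\<omega>. ennreal (\<psi> (W1 \<omega>)) * (\<integral>\<^sup>+b. ennreal (exponential_density \<mu> b) * ennreal (\<phi> (max 0 (b - (A m \<omega> + W m \<omega>)))) \<partial>lborel) \<partial>M)"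
proof -
  define j where "j = (Inr (Inl (Suc m)) :: nat + nat + unit)"
  define K where "K = driving_index - {j}"
  have j: "j \<in> driving_index" unfolding j_def driving_index_def by auto
  define R where "R = (\<lambda>\<omega>. restrict (\<lambda>i. driving_family A B W1 i \<omega>) K)"
  define RJ where "RJ = (\<lambda>\<omega>. restrict (\<lambda>i. driving_family A B W1 i \<omega>) {j})"
  have ind: "indep_var (PiM K (\<lambda>_. borel)) R (PiM {j} (\<lambda>_. borel)) RJ"
    using indep_K[OF j] unfolding K_def R_def RJ_def .
  define F where "F = (\<lambda>p::(nat + nat + unit \<Rightarrow> real) \<times> (nat + nat + unit \<Rightarrow> real).
      ennreal (\<psi> (fst p (Inr (Inr ()))) * \<phi> (max 0 (snd p j - (fst p (Inl m) + WF m (fst p))))))"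
  have c1: "(\<lambda>p::(nat + nat + unit \<Rightarrow> real) \<times> (nat + nat + unit \<Rightarrow> real). fst p i) \<in> borel_measurable (PiM K (\<lambda>_. borel) \<Otimes>\<^sub>M PiM {j} (\<lambda>_. borel))" for i
    by (rule measurable_compose[OF measurable_fst comp_meas])
  have c2: "(\<lambda>p::(nat + nat + unit \<Rightarrow> real) \<times> (nat + nat + unit \<Rightarrow> real). snd p i) \<in> borel_measurable (PiM K (\<lambda>_. borel) \<Otimes>\<^sub>M PiM {j} (\<lambda>_. borel))" for i
    by (rule measurable_compose[OF measurable_snd comp_meas])
  have c3: "(\<lambda>p::(nat + nat + unit \<Rightarrow> real) \<times> (nat + nat + unit \<Rightarrow> real). WF m (fst p)) \<in> borel_measurable (PiM K (\<lambda>_. borel) \<Otimes>\<^sub>M PiM {j} (\<lambda>_. borel))"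
    by (rule measurable_compose[OF measurable_fst WF_meas])
  have Fm: "F \<in> borel_measurable (PiM K (\<lambda>_. borel) \<Otimes>\<^sub>M PiM {j} (\<lambda>_. borel))"
    unfolding F_def using c1 c2 c3 by measurable
  have RF: "R \<omega> (Inr (Inr ())) = W1 \<omega>" "WF m (R \<omega>) = W m \<omega>" "R \<omega> (Inl m) = A m \<omega>" for \<omega>
    using R_facts[OF m K_def, of \<omega>] m unfolding R_def j_def K_def
    by (auto simp: driving_index_def driving_family_def)
  have WS: "W (Suc m) \<omega> = max 0 (B (Suc m) \<omega> - (A m \<omega> + W m \<omega>))" for \<omega>
    using m by (cases m) auto
  have "(\<integral>\<^sup>+\<omega>. ennreal (\<psi> (W1 \<omega>) * \<phi> (W (Suc m) \<omega>)) \<partial>M) = (\<integral>\<^sup>+\<omega>. F (R \<omega>, RJ \<omega>) \<partial>M)"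
    by (intro nn_integral_cong) (simp add: F_def RF WS RJ_def j_def driving_family_def)
  also have "\<dots> = (\<integral>\<^sup>+\<omega>. (\<integral>\<^sup>+v. F (R \<omega>, v) \<partial>distr M (PiM {j} (\<lambda>_. borel)) RJ) \<partial>M)"
    by (rule GI[OF ind Fm])
  also have "\<dots> = (\<integral>\<^sup>+\<omega>. ennreal (\<psi> (W1 \<omega>)) * (\<integral>\<^sup>+b. ennreal (exponential_density \<mu> b) * ennreal (\<phi> (max 0 (b - (A m \<omega> + W m \<omega>)))) \<partial>lborel) \<partial>M)"
  proof (rule nn_integral_cong)
    fix \<omega>
    define G where "G = (\<lambda>b. ennreal (\<psi> (W1 \<omega>) * \<phi> (max 0 (b - (A m \<omega> + W m \<omega>)))))"
    have Gm: "G \<in> borel_measurable borel" unfolding G_def by measurable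
    have "(\<integral>\<^sup>+v. F (R \<omega>, v) \<partial>distr M (PiM {j} (\<lambda>_. borel)) RJ) = (\<integral>\<^sup>+v. G (v j) \<partial>distr M (PiM {j} (\<lambda>_. borel)) RJ)"
      by (simp add: F_def G_def RF)
    also have "\<dots> = (\<integral>\<^sup>+v. G v \<partial>distr M borel (driving_family A B W1 j))"
      unfolding RJ_def by (rule inner_conv[OF j Gm])
    also have "\<dots> = (\<integral>\<^sup>+v. G v \<partial>distr M borel (B (Suc m)))"
      by (simp add: j_def driving_family_def)
    also have "\<dots> = (\<integral>\<^sup>+v. ennreal (exponential_density \<mu> v) * G v \<partial>lborel)"
      by (rule distr_B_density[OF _ Gm]) simp
    also have "\<dots> = (\<integral>\<^sup>+v. ennreal (\<psi> (W1 \<omega>)) * (ennreal (exponential_density \<mu> v) * ennreal (\<phi> (max 0 (v - (A m \<omega> + W m \<omega>))))) \<partial>lborel)"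
      by (intro nn_integral_cong) (simp add: G_def ennreal_mult \<psi>0 \<phi>0 mult_ac)
    also have "\<dots> = ennreal (\<psi> (W1 \<omega>)) * (\<integral>\<^sup>+b. ennreal (exponential_density \<mu> b) * ennreal (\<phi> (max 0 (b - (A m \<omega> + W m \<omega>)))) \<partial>lborel)"
      by (rule nn_integral_cmult) (use mu in measurable)
    finally show "(\<integral>\<^sup>+v. F (R \<omega>, v) \<partial>distr M (PiM {j} (\<lambda>_. borel)) RJ) = \<dots>" .
  qed
  finally show ?thesis .
qed

end



context setting begin

abbreviation "\<alpha> \<equiv> (\<integral>\<omega>. exp (- \<mu> * A 1 \<omega>) \<partial>M)"

lemma expA_int: "integrable M (\<lambda>\<omega>. exp (- \<mu> * A 1 \<omega>))"
proof (rule integrable_const_bound[where B=1])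
  show "AE x in M. norm (exp (- \<mu> * A 1 x)) \<le> 1"
    using A_nonneg[OF order_refl] by (auto elim!: eventually_mono intro!: mult_nonneg_nonneg simp: less_imp_le[OF mu])
qed (use A_rv[of 1] in measurable)

lemma alpha_nonneg: "\<alpha> \<ge> 0" by (intro integral_nonneg_AE) auto

lemma alpha_nn:
  assumes m: "m \<ge> 1"
  shows "(\<integral>\<^sup>+v. ennreal (exp (- \<mu> * v)) \<partial>distr M borel (A m)) = ennreal \<alpha>"
proof -
  have "(\<integral>\<^sup>+v. ennreal (exp (- \<mu> * v)) \<partial>distr M borel (A m)) = (\<integral>\<^sup>+v. ennreal (exp (- \<mu> * v)) \<partial>distr M borel (A 1))"
    by (simp add: A_ident[OF m])
  also have "\<dots> = (\<integral>\<^sup>+\<omega>. ennreal (exp (- \<mu> * A 1 \<omega>)) \<partial>M)"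
    using A_rv[of 1] by (subst nn_integral_distr) auto
  also have "\<dots> = ennreal \<alpha>"
    using expA_int by (intro nn_integral_eq_integral) auto
  finally show ?thesis .
qed

lemma stepA:
  assumes m: "m \<ge> 1" and \<psi>[measurable]: "\<psi> \<in> borel_measurable borel" and \<psi>0: "\<And>x. \<psi> x \<ge> 0"
  shows "(\<integral>\<^sup>+\<omega>. ennreal (\<psi> (W1 \<omega>) * exp (- \<mu> * (A m \<omega> + W m \<omega>))) \<partial>M)
       = (\<integral>\<^sup>+\<omega>. ennreal (\<psi> (W1 \<omega>) * exp (- \<mu> * W m \<omega>)) \<partial>M) * ennreal \<alpha>"
proof -
  define j where "j = (Inl m :: nat + nat + unit)"
  define K where "K = driving_index - {j}"
  have j: "j \<in> driving_index" unfolding j_def driving_index_def using m by auto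
  define R where "R = (\<lambda>\<omega>. restrict (\<lambda>i. driving_family A B W1 i \<omega>) K)"
  define RJ where "RJ = (\<lambda>\<omega>. restrict (\<lambda>i. driving_family A B W1 i \<omega>) {j})"
  have ind: "indep_var (PiM K (\<lambda>_. borel)) R (PiM {j} (\<lambda>_. borel)) RJ"
    using indep_K[OF j] unfolding K_def R_def RJ_def .
  define F where "F = (\<lambda>p::(nat + nat + unit \<Rightarrow> real) \<times> (nat + nat + unit \<Rightarrow> real).
      ennreal (\<psi> (fst p (Inr (Inr ()))) * exp (- \<mu> * (snd p j + WF m (fst p)))))"
  have c1: "(\<lambda>p::(nat + nat + unit \<Rightarrow> real) \<times> (nat + nat + unit \<Rightarrow> real). fst p i) \<in> borel_measurable (PiM K (\<lambda>_. borel) \<Otimes>\<^sub>M PiM {j} (\<lambda>_. borel))" for i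
    by (rule measurable_compose[OF measurable_fst comp_meas])
  have c2: "(\<lambda>p::(nat + nat + unit \<Rightarrow> real) \<times> (nat + nat + unit \<Rightarrow> real). snd p i) \<in> borel_measurable (PiM K (\<lambda>_. borel) \<Otimes>\<^sub>M PiM {j} (\<lambda>_. borel))" for i
    by (rule measurable_compose[OF measurable_snd comp_meas])
  have c3: "(\<lambda>p::(nat + nat + unit \<Rightarrow> real) \<times> (nat + nat + unit \<Rightarrow> real). WF m (fst p)) \<in> borel_measurable (PiM K (\<lambda>_. borel) \<Otimes>\<^sub>M PiM {j} (\<lambda>_. borel))"
    by (rule measurable_compose[OF measurable_fst WF_meas])
  have Fm: "F \<in> borel_measurable (PiM K (\<lambda>_. borel) \<Otimes>\<^sub>M PiM {j} (\<lambda>_. borel))"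
    unfolding F_def using c1 c2 c3 by measurable
  have RF: "R \<omega> (Inr (Inr ())) = W1 \<omega>" "WF m (R \<omega>) = W m \<omega>" for \<omega>
    using R_facts[OF m K_def, of \<omega>] m unfolding R_def j_def K_def
    by (auto simp: driving_index_def driving_family_def)
  have "(\<integral>\<^sup>+\<omega>. ennreal (\<psi> (W1 \<omega>) * exp (- \<mu> * (A m \<omega> + W m \<omega>))) \<partial>M) = (\<integral>\<^sup>+\<omega>. F (R \<omega>, RJ \<omega>) \<partial>M)"
    by (intro nn_integral_cong) (simp add: F_def RF RJ_def j_def driving_family_def)
  also have "\<dots> = (\<integral>\<^sup>+\<omega>. (\<integral>\<^sup>+v. F (R \<omega>, v) \<partial>distr M (PiM {j} (\<lambda>_. borel)) RJ) \<partial>M)"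
    by (rule GI[OF ind Fm])
  also have "\<dots> = (\<integral>\<^sup>+\<omega>. ennreal (\<psi> (W1 \<omega>) * exp (- \<mu> * W m \<omega>)) * ennreal \<alpha> \<partial>M)"
  proof (rule nn_integral_cong)
    fix \<omega>
    define G where "G = (\<lambda>b. ennreal (\<psi> (W1 \<omega>) * exp (- \<mu> * (b + W m \<omega>))))"
    have Gm: "G \<in> borel_measurable borel" unfolding G_def by measurable
    have "(\<integral>\<^sup>+v. F (R \<omega>, v) \<partial>distr M (PiM {j} (\<lambda>_. borel)) RJ) = (\<integral>\<^sup>+v. G (v j) \<partial>distr M (PiM {j} (\<lambda>_. borel)) RJ)"
      by (simp add: F_def G_def RF)
    also have "\<dots> = (\<integral>\<^sup>+v. G v \<partial>distr M borel (driving_family A B W1 j))"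
      unfolding RJ_def by (rule inner_conv[OF j Gm])
    also have "\<dots> = (\<integral>\<^sup>+v. G v \<partial>distr M borel (A m))"
      by (simp add: j_def driving_family_def)
    also have "\<dots> = (\<integral>\<^sup>+v. ennreal (\<psi> (W1 \<omega>) * exp (- \<mu> * W m \<omega>)) * ennreal (exp (- \<mu> * v)) \<partial>distr M borel (A m))"
    proof (intro nn_integral_cong)
      fix v
      have "exp (- \<mu> * (v + W m \<omega>)) = exp (- \<mu> * W m \<omega>) * exp (- \<mu> * v)"
        by (simp add: exp_add[symmetric] algebra_simps)
      then show "G v = ennreal (\<psi> (W1 \<omega>) * exp (- \<mu> * W m \<omega>)) * ennreal (exp (- \<mu> * v))"
        by (simp add: G_def ennreal_mult[symmetric] \<psi>0 mult.assoc)
    qed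
    also have "\<dots> = ennreal (\<psi> (W1 \<omega>) * exp (- \<mu> * W m \<omega>)) * (\<integral>\<^sup>+v. ennreal (exp (- \<mu> * v)) \<partial>distr M borel (A m))"
      by (rule nn_integral_cmult) measurable
    also have "\<dots> = ennreal (\<psi> (W1 \<omega>) * exp (- \<mu> * W m \<omega>)) * ennreal \<alpha>"
      by (simp only: alpha_nn[OF m])
    finally show "(\<integral>\<^sup>+v. F (R \<omega>, v) \<partial>distr M (PiM {j} (\<lambda>_. borel)) RJ) = \<dots>" .
  qed
  also have "\<dots> = (\<integral>\<^sup>+\<omega>. ennreal (\<psi> (W1 \<omega>) * exp (- \<mu> * W m \<omega>)) \<partial>M) * ennreal \<alpha>"
    by (rule nn_integral_multc) (use W_meas W1_rv in measurable)
  finally show ?thesis .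
qed

end



context setting begin

lemma AE_c: assumes "m \<ge> 1" shows "AE \<omega> in M. A m \<omega> + W m \<omega> \<ge> 0"
  using A_nonneg[OF assms] W_nonneg[OF assms] by eventually_elim simp

lemma W_Suc_nonneg: "m \<ge> 1 \<Longrightarrow> W (Suc m) \<omega> \<ge> 0"
  by (cases m) auto

lemma S1:
  assumes m: "m \<ge> 1" and \<psi>[measurable]: "\<psi> \<in> borel_measurable borel" and \<psi>0: "\<And>x. \<psi> x \<ge> 0"
  shows "(\<integral>\<^sup>+\<omega>. ennreal (\<psi> (W1 \<omega>) * W (Suc m) \<omega>) \<partial>M)
       = (\<integral>\<^sup>+\<omega>. ennreal (\<psi> (W1 \<omega>) * exp (- \<mu> * W m \<omega>)) \<partial>M) * ennreal \<alpha> * ennreal (1 / \<mu>)"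
proof -
  have "(\<integral>\<^sup>+\<omega>. ennreal (\<psi> (W1 \<omega>) * W (Suc m) \<omega>) \<partial>M) = (\<integral>\<^sup>+\<omega>. ennreal (\<psi> (W1 \<omega>) * max 0 (W (Suc m) \<omega>)) \<partial>M)"
    using W_Suc_nonneg[OF m] by (intro nn_integral_cong) (simp add: max_def)
  also have "\<dots> = (\<integral>\<^sup>+\<omega>. ennreal (\<psi> (W1 \<omega>)) * (\<integral>\<^sup>+b. ennreal (exponential_density \<mu> b) * ennreal (max 0 (max 0 (b - (A m \<omega> + W m \<omega>)))) \<partial>lborel) \<partial>M)"
    by (rule stepB[OF m \<psi> _ \<psi>0]) auto
  also have "\<dots> = (\<integral>\<^sup>+\<omega>. ennreal (\<psi> (W1 \<omega>) * exp (- \<mu> * (A m \<omega> + W m \<omega>))) * ennreal (1 / \<mu>) \<partial>M)"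
  proof (rule nn_integral_cong_AE)
    show "AE \<omega> in M. ennreal (\<psi> (W1 \<omega>)) * (\<integral>\<^sup>+b. ennreal (exponential_density \<mu> b) * ennreal (max 0 (max 0 (b - (A m \<omega> + W m \<omega>)))) \<partial>lborel)
       = ennreal (\<psi> (W1 \<omega>) * exp (- \<mu> * (A m \<omega> + W m \<omega>))) * ennreal (1 / \<mu>)"
      using AE_c[OF m]
    proof eventually_elim
      case (elim \<omega>)
      show ?case using L1[OF mu elim] mu \<psi>0
        by (simp add: ennreal_mult[symmetric] divide_inverse mult.assoc)
    qed
  qed
  also have "\<dots> = (\<integral>\<^sup>+\<omega>. ennreal (\<psi> (W1 \<omega>) * exp (- \<mu> * (A m \<omega> + W m \<omega>))) \<partial>M) * ennreal (1 / \<mu>)"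
    by (rule nn_integral_multc) (use W_meas W1_rv A_rv[OF m] in measurable)
  also have "\<dots> = (\<integral>\<^sup>+\<omega>. ennreal (\<psi> (W1 \<omega>) * exp (- \<mu> * W m \<omega>)) \<partial>M) * ennreal \<alpha> * ennreal (1 / \<mu>)"
    by (simp only: stepA[OF m \<psi> \<psi>0])
  finally show ?thesis .
qed

lemma S2:
  assumes m: "m \<ge> 1" and \<psi>[measurable]: "\<psi> \<in> borel_measurable borel" and \<psi>0: "\<And>x. \<psi> x \<ge> 0"
  shows "(\<integral>\<^sup>+\<omega>. ennreal (\<psi> (W1 \<omega>) * exp (- \<mu> * W (Suc m) \<omega>)) \<partial>M)
       + (\<integral>\<^sup>+\<omega>. ennreal (\<psi> (W1 \<omega>) * exp (- \<mu> * W m \<omega>)) \<partial>M) * ennreal \<alpha> * ennreal (1 / 2)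
       = (\<integral>\<^sup>+\<omega>. ennreal (\<psi> (W1 \<omega>)) \<partial>M)"
proof -
  have wm[measurable]: "W m \<in> borel_measurable M" "A m \<in> borel_measurable M" using W_meas A_rv[OF m] by auto
  have w1[measurable]: "W1 \<in> borel_measurable M" using W1_rv .
  have "(\<integral>\<^sup>+\<omega>. ennreal (\<psi> (W1 \<omega>) * exp (- \<mu> * W (Suc m) \<omega>)) \<partial>M)
      = (\<integral>\<^sup>+\<omega>. ennreal (\<psi> (W1 \<omega>)) * (\<integral>\<^sup>+b. ennreal (exponential_density \<mu> b) * ennreal (exp (- \<mu> * max 0 (b - (A m \<omega> + W m \<omega>)))) \<partial>lborel) \<partial>M)"
    by (rule stepB[OF m \<psi> _ \<psi>0]) auto
  moreover have "(\<integral>\<^sup>+\<omega>. ennreal (\<psi> (W1 \<omega>) * exp (- \<mu> * W m \<omega>)) \<partial>M) * ennreal \<alpha> * ennreal (1 / 2)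
      = (\<integral>\<^sup>+\<omega>. ennreal (\<psi> (W1 \<omega>)) * ennreal (exp (- \<mu> * (A m \<omega> + W m \<omega>)) / 2) \<partial>M)"
  proof -
    have "(\<integral>\<^sup>+\<omega>. ennreal (\<psi> (W1 \<omega>) * exp (- \<mu> * W m \<omega>)) \<partial>M) * ennreal \<alpha> * ennreal (1 / 2)
       = (\<integral>\<^sup>+\<omega>. ennreal (\<psi> (W1 \<omega>) * exp (- \<mu> * (A m \<omega> + W m \<omega>))) \<partial>M) * ennreal (1 / 2)"
      by (simp only: stepA[OF m \<psi> \<psi>0])
    also have "\<dots> = (\<integral>\<^sup>+\<omega>. ennreal (\<psi> (W1 \<omega>) * exp (- \<mu> * (A m \<omega> + W m \<omega>))) * ennreal (1 / 2) \<partial>M)"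
      by (rule nn_integral_multc[symmetric]) measurable
    also have "\<dots> = (\<integral>\<^sup>+\<omega>. ennreal (\<psi> (W1 \<omega>)) * ennreal (exp (- \<mu> * (A m \<omega> + W m \<omega>)) / 2) \<partial>M)"
    proof (intro nn_integral_cong)
      fix \<omega>
      have "ennreal (\<psi> (W1 \<omega>) * exp (- \<mu> * (A m \<omega> + W m \<omega>))) * ennreal (1 / 2)
          = ennreal (\<psi> (W1 \<omega>) * exp (- \<mu> * (A m \<omega> + W m \<omega>)) * (1 / 2))"
        by (rule ennreal_mult[symmetric]) (auto simp: \<psi>0)
      also have "\<dots> = ennreal (\<psi> (W1 \<omega>) * (exp (- \<mu> * (A m \<omega> + W m \<omega>)) / 2))" by simp
      also have "\<dots> = ennreal (\<psi> (W1 \<omega>)) * ennreal (exp (- \<mu> * (A m \<omega> + W m \<omega>)) / 2)"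
        by (rule ennreal_mult) (auto simp: \<psi>0)
      finally show "ennreal (\<psi> (W1 \<omega>) * exp (- \<mu> * (A m \<omega> + W m \<omega>))) * ennreal (1 / 2)
          = ennreal (\<psi> (W1 \<omega>)) * ennreal (exp (- \<mu> * (A m \<omega> + W m \<omega>)) / 2)" .
    qed
    finally show ?thesis .
  qed
  ultimately have "(\<integral>\<^sup>+\<omega>. ennreal (\<psi> (W1 \<omega>) * exp (- \<mu> * W (Suc m) \<omega>)) \<partial>M)
       + (\<integral>\<^sup>+\<omega>. ennreal (\<psi> (W1 \<omega>) * exp (- \<mu> * W m \<omega>)) \<partial>M) * ennreal \<alpha> * ennreal (1 / 2)
     = (\<integral>\<^sup>+\<omega>. ennreal (\<psi> (W1 \<omega>)) * (\<integral>\<^sup>+b. ennreal (exponential_density \<mu> b) * ennreal (exp (- \<mu> * max 0 (b - (A m \<omega> + W m \<omega>)))) \<partial>lborel)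
          + ennreal (\<psi> (W1 \<omega>)) * ennreal (exp (- \<mu> * (A m \<omega> + W m \<omega>)) / 2) \<partial>M)"
    by (simp only:) (rule nn_integral_add[symmetric]; measurable)
  also have "\<dots> = (\<integral>\<^sup>+\<omega>. ennreal (\<psi> (W1 \<omega>)) \<partial>M)"
  proof (rule nn_integral_cong_AE)
    show "AE \<omega> in M. ennreal (\<psi> (W1 \<omega>)) * (\<integral>\<^sup>+b. ennreal (exponential_density \<mu> b) * ennreal (exp (- \<mu> * max 0 (b - (A m \<omega> + W m \<omega>)))) \<partial>lborel)
          + ennreal (\<psi> (W1 \<omega>)) * ennreal (exp (- \<mu> * (A m \<omega> + W m \<omega>)) / 2) = ennreal (\<psi> (W1 \<omega>))"
      using AE_c[OF m]
    proof eventually_elim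
      case (elim \<omega>)
      show ?case using L2[OF mu elim] by (simp add: distrib_left[symmetric])
    qed
  qed
  finally show ?thesis .
qed

lemma S3:
  assumes m: "m \<ge> 1" and \<psi>[measurable]: "\<psi> \<in> borel_measurable borel" and \<psi>0: "\<And>x. \<psi> x \<ge> 0"
  shows "(\<integral>\<^sup>+\<omega>. ennreal (\<psi> (W1 \<omega>) * (W (Suc m) \<omega> * exp (- \<mu> * W (Suc m) \<omega>))) \<partial>M)
       = (\<integral>\<^sup>+\<omega>. ennreal (\<psi> (W1 \<omega>) * exp (- \<mu> * W m \<omega>)) \<partial>M) * ennreal \<alpha> * ennreal (1 / (4 * \<mu>))"
proof -
  have "(\<integral>\<^sup>+\<omega>. ennreal (\<psi> (W1 \<omega>) * (W (Suc m) \<omega> * exp (- \<mu> * W (Suc m) \<omega>))) \<partial>M)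
      = (\<integral>\<^sup>+\<omega>. ennreal (\<psi> (W1 \<omega>) * (max 0 (W (Suc m) \<omega>) * exp (- \<mu> * max 0 (W (Suc m) \<omega>)))) \<partial>M)"
    using W_Suc_nonneg[OF m] by (intro nn_integral_cong) (simp only: max_absorb2)
  also have "\<dots> = (\<integral>\<^sup>+\<omega>. ennreal (\<psi> (W1 \<omega>)) * (\<integral>\<^sup>+b. ennreal (exponential_density \<mu> b) * ennreal (max 0 (max 0 (b - (A m \<omega> + W m \<omega>))) * exp (- \<mu> * max 0 (max 0 (b - (A m \<omega> + W m \<omega>))))) \<partial>lborel) \<partial>M)"
    apply (rule stepB[OF m \<psi> _ \<psi>0, where \<phi>="\<lambda>x. max 0 x * exp (- \<mu> * max 0 x)"])
    apply measurable
    done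
  also have "\<dots> = (\<integral>\<^sup>+\<omega>. ennreal (\<psi> (W1 \<omega>) * exp (- \<mu> * (A m \<omega> + W m \<omega>))) * ennreal (1 / (4 * \<mu>)) \<partial>M)"
  proof (rule nn_integral_cong_AE)
    show "AE \<omega> in M. ennreal (\<psi> (W1 \<omega>)) * (\<integral>\<^sup>+b. ennreal (exponential_density \<mu> b) * ennreal (max 0 (max 0 (b - (A m \<omega> + W m \<omega>))) * exp (- \<mu> * max 0 (max 0 (b - (A m \<omega> + W m \<omega>))))) \<partial>lborel)
       = ennreal (\<psi> (W1 \<omega>) * exp (- \<mu> * (A m \<omega> + W m \<omega>))) * ennreal (1 / (4 * \<mu>))"
      using AE_c[OF m]
    proof eventually_elim
      case (elim \<omega>)
      have "max 0 (max 0 (b - (A m \<omega> + W m \<omega>))) = max 0 (b - (A m \<omega> + W m \<omega>))" for b :: real by simp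
      then have "(\<integral>\<^sup>+b. ennreal (exponential_density \<mu> b) * ennreal (max 0 (max 0 (b - (A m \<omega> + W m \<omega>))) * exp (- \<mu> * max 0 (max 0 (b - (A m \<omega> + W m \<omega>))))) \<partial>lborel)
         = ennreal (exp (- \<mu> * (A m \<omega> + W m \<omega>)) / (4 * \<mu>))"
        by (simp only: L3[OF mu elim])
      moreover have "ennreal (\<psi> (W1 \<omega>)) * ennreal (exp (- \<mu> * (A m \<omega> + W m \<omega>)) / (4 * \<mu>))
          = ennreal (\<psi> (W1 \<omega>) * exp (- \<mu> * (A m \<omega> + W m \<omega>))) * ennreal (1 / (4 * \<mu>))"
      proof -
        have "ennreal (\<psi> (W1 \<omega>)) * ennreal (exp (- \<mu> * (A m \<omega> + W m \<omega>)) / (4 * \<mu>))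
          = ennreal (\<psi> (W1 \<omega>) * (exp (- \<mu> * (A m \<omega> + W m \<omega>)) / (4 * \<mu>)))"
          by (rule ennreal_mult[symmetric]) (use mu \<psi>0 in auto)
        also have "\<psi> (W1 \<omega>) * (exp (- \<mu> * (A m \<omega> + W m \<omega>)) / (4 * \<mu>)) = \<psi> (W1 \<omega>) * exp (- \<mu> * (A m \<omega> + W m \<omega>)) * (1 / (4 * \<mu>))"
          by simp
        also have "ennreal \<dots> = ennreal (\<psi> (W1 \<omega>) * exp (- \<mu> * (A m \<omega> + W m \<omega>))) * ennreal (1 / (4 * \<mu>))"
          by (rule ennreal_mult) (use mu \<psi>0 in auto)
        finally show ?thesis .
      qed
      ultimately show ?case by simp
    qed
  qed
  also have "\<dots> = (\<integral>\<^sup>+\<omega>. ennreal (\<psi> (W1 \<omega>) * exp (- \<mu> * (A m \<omega> + W m \<omega>))) \<partial>M) * ennreal (1 / (4 * \<mu>))"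
    by (rule nn_integral_multc) (use W_meas W1_rv A_rv[OF m] in measurable)
  also have "\<dots> = (\<integral>\<^sup>+\<omega>. ennreal (\<psi> (W1 \<omega>) * exp (- \<mu> * W m \<omega>)) \<partial>M) * ennreal \<alpha> * ennreal (1 / (4 * \<mu>))"
    by (simp only: stepA[OF m \<psi> \<psi>0])
  finally show ?thesis .
qed

lemma stat12:
  assumes h[measurable]: "h \<in> borel_measurable borel"
  shows "(\<integral>\<^sup>+\<omega>. h (W 2 \<omega>) \<partial>M) = (\<integral>\<^sup>+\<omega>. h (W 1 \<omega>) \<partial>M)"
proof -
  have "finite {1::nat}" "{1::nat} \<subseteq> {1..}" by auto
  then have D: "distr M (PiM {1} (\<lambda>_. borel)) (\<lambda>\<omega>. \<lambda>i\<in>{1::nat}. W (i + 1) \<omega>)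
      = distr M (PiM {1} (\<lambda>_. borel)) (\<lambda>\<omega>. \<lambda>i\<in>{1::nat}. W i \<omega>)"
    using stat unfolding stationary_process_def by blast
  have m1: "(\<lambda>\<omega>. \<lambda>i\<in>{1::nat}. W (i + 1) \<omega>) \<in> measurable M (PiM {1} (\<lambda>_. borel))"
    by (intro measurable_restrict W_meas)
  have m2: "(\<lambda>\<omega>. \<lambda>i\<in>{1::nat}. W i \<omega>) \<in> measurable M (PiM {1} (\<lambda>_. borel))"
    by (intro measurable_restrict W_meas)
  have hm: "(\<lambda>f. h (f (1::nat))) \<in> borel_measurable (PiM {1} (\<lambda>_. (borel::real measure)))"
    by measurable
  have "(\<integral>\<^sup>+\<omega>. h (W 2 \<omega>) \<partial>M) = (\<integral>\<^sup>+f. h (f 1) \<partial>distr M (PiM {1} (\<lambda>_. borel)) (\<lambda>\<omega>. \<lambda>i\<in>{1::nat}. W (i + 1) \<omega>))"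
    proof (subst nn_integral_distr[OF m1])
    show "(\<lambda>f. h (f 1)) \<in> borel_measurable (distr M (PiM {1} (\<lambda>_. borel)) (\<lambda>\<omega>. \<lambda>i\<in>{1::nat}. W (i + 1) \<omega>))"
      using hm by (simp only: measurable_distr_eq1)
    show "(\<integral>\<^sup>+\<omega>. h (W 2 \<omega>) \<partial>M) = (\<integral>\<^sup>+\<omega>. h ((\<lambda>i\<in>{1::nat}. W (i + 1) \<omega>) 1) \<partial>M)"
      by (simp only: restrict_apply' singletonI one_add_one)
  qed
  also have "\<dots> = (\<integral>\<^sup>+f. h (f 1) \<partial>distr M (PiM {1} (\<lambda>_. borel)) (\<lambda>\<omega>. \<lambda>i\<in>{1::nat}. W i \<omega>))"
    by (simp only: D)
  also have "\<dots> = (\<integral>\<^sup>+\<omega>. h (W 1 \<omega>) \<partial>M)"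
    proof (subst nn_integral_distr[OF m2])
    show "(\<lambda>f. h (f 1)) \<in> borel_measurable (distr M (PiM {1} (\<lambda>_. borel)) (\<lambda>\<omega>. \<lambda>i\<in>{1::nat}. W i \<omega>))"
      using hm by (simp only: measurable_distr_eq1)
    show "(\<integral>\<^sup>+\<omega>. h ((\<lambda>i\<in>{1::nat}. W i \<omega>) 1) \<partial>M) = (\<integral>\<^sup>+\<omega>. h (W 1 \<omega>) \<partial>M)"
      by (simp only: restrict_apply' singletonI)
  qed
  finally show ?thesis .
qed

end



lemma e_sum:
  fixes a b c d e :: real
  assumes "0 \<le> a" "0 \<le> b" "0 \<le> c" "0 \<le> e" "0 \<le> d"
    and H: "ennreal a + ennreal b * ennreal c * ennreal e = ennreal d"
  shows "a + b * c * e = d"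
proof -
  have "ennreal b * ennreal c * ennreal e = ennreal (b * c * e)"
    using assms(1-4) by (simp add: ennreal_mult[symmetric])
  then have "ennreal a + ennreal b * ennreal c * ennreal e = ennreal (a + b * c * e)"
    using assms(1-4) by simp
  then have "ennreal (a + b * c * e) = ennreal d" using H by simp
  moreover have "0 \<le> a + b * c * e" using assms by simp
  ultimately show ?thesis using assms(5) by (simp only: ennreal_inj)
qed

lemma e_prod3:
  fixes b c e :: real
  assumes "0 \<le> b" "0 \<le> c" "0 \<le> e"
  shows "ennreal b * ennreal c * ennreal e = ennreal (b * c * e)"
  using assms by (simp add: ennreal_mult[symmetric])

lemma fin_alg:
  fixes al mu x :: real
  assumes ne: "2 + al \<noteq> 0" "mu \<noteq> 0"
  shows "((2 / (2 + al)) * al / mu * (2 / (2 + al)) + x * ((2 / (2 + al)) * al * (1 / (4 * mu)) - (2 / (2 + al)) * al / mu * (2 / (2 + al)))) * al * (1 / mu)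
     - ((2 / (2 + al)) * al / mu) * ((2 / (2 + al)) * al / mu)
   = (2 * al / (2 + al)) * (3 / 2 - 2 * al / (2 + al)) * (1 / mu^2) * ((- al / 2) * x)"
proof -
  define p where "p = 1 / (2 + al)"
  define q where "q = 1 / mu"
  have hp: "p * (2 + al) = 1" using ne unfolding p_def by simp
  have hq: "q * mu = 1" using ne unfolding q_def by simp
  have e1: "2 / (2 + al) = 2 * p" "2 * al / (2 + al) = 2 * al * p" "1 / mu = q" "1 / mu^2 = q * q"
    "1 / (4 * mu) = q / 4" unfolding p_def q_def by (auto simp: power2_eq_square)
  have e2: "a / mu = a * q" for a unfolding q_def by simp
  show ?thesis unfolding e1 e2 using hp hq by algebra
qed

context prob_space begin
lemma cov_exp:
  fixes X Y :: "'a \<Rightarrow> real"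
  assumes X: "integrable M X" and Y: "integrable M Y" and XY: "integrable M (\<lambda>\<omega>. X \<omega> * Y \<omega>)"
  shows "covariance M X Y = (\<integral>\<omega>. X \<omega> * Y \<omega> \<partial>M) - (\<integral>\<omega>. X \<omega> \<partial>M) * (\<integral>\<omega>. Y \<omega> \<partial>M)"
proof -
  define a where "a = (\<integral>\<omega>. X \<omega> \<partial>M)"
  define b where "b = (\<integral>\<omega>. Y \<omega> \<partial>M)"
  have e: "(\<lambda>\<omega>. (X \<omega> - a) * (Y \<omega> - b)) = (\<lambda>\<omega>. (X \<omega> * Y \<omega> - b * X \<omega>) - (a * Y \<omega> - a * b))"
    by (auto simp: fun_eq_iff algebra_simps)
  have "covariance M X Y = (\<integral>\<omega>. (X \<omega> * Y \<omega> - b * X \<omega>) - (a * Y \<omega> - a * b) \<partial>M)"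
    unfolding covariance_def a_def[symmetric] b_def[symmetric] e ..
  also have "\<dots> = (\<integral>\<omega>. X \<omega> * Y \<omega> \<partial>M) - b * a - (a * b - a * b)"
    using X Y XY by (simp add: integral_diff a_def b_def prob_space)
  finally show ?thesis unfolding a_def b_def by simp
qed
end

context setting begin

lemma main:
  assumes k: "k \<ge> 1"
  shows "covariance M (W 1) (W (1 + k))
     = (2 * \<alpha> / (2 + \<alpha>)) * (3 / 2 - 2 * \<alpha> / (2 + \<alpha>)) * (1 / \<mu>^2) * (- \<alpha> / 2) ^ k"
proof -
  have one: "(1::nat) \<ge> 1" by simp
  have W1eq: "W 1 = W1" by (simp add: One_nat_def)
  have al: "\<alpha> \<ge> 0" by (rule alpha_nonneg)
  have c1: "(\<lambda>x::real. 1::real) \<in> borel_measurable borel" by simp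
  have c1p: "\<And>x::real. 0 \<le> (1::real)" by simp
  have cmax: "(\<lambda>x::real. max 0 x) \<in> borel_measurable borel" by measurable
  have cmaxp: "\<And>x::real. 0 \<le> max 0 x" by simp
  have W1m[measurable]: "W1 \<in> borel_measurable M" by (rule W1_rv)
  have Wm[measurable]: "W m \<in> borel_measurable M" for m by (rule W_meas)
  define G where "G = 2 / (2 + \<alpha>)"
  have ne2: "2 + \<alpha> \<noteq> 0" using al by linarith
  have Gf: "G * (2 + \<alpha>) = 2" using ne2 unfolding G_def by (simp add: field_simps)
  have G0: "G \<ge> 0" using al unfolding G_def by simp
  define g where "g m = (\<integral>\<omega>. exp (- \<mu> * W m \<omega>) \<partial>M)" for m
  have g_int: "integrable M (\<lambda>\<omega>. exp (- \<mu> * W m \<omega>))" if "m \<ge> 1" for m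
  proof (rule integrable_const_bound[where B=1])
    show "AE x in M. norm (exp (- \<mu> * W m x)) \<le> 1"
      using W_nonneg[OF that] by (auto elim!: eventually_mono intro!: mult_nonneg_nonneg simp: less_imp_le[OF mu])
  qed measurable
  have g_nn: "(\<integral>\<^sup>+\<omega>. ennreal (exp (- \<mu> * W m \<omega>)) \<partial>M) = ennreal (g m)" if "m \<ge> 1" for m
    unfolding g_def using g_int[OF that] by (intro nn_integral_eq_integral) auto
  have g_nonneg: "g m \<ge> 0" for m unfolding g_def by (intro integral_nonneg_AE) auto
  have one_int: "(\<integral>\<^sup>+\<omega>. ennreal 1 \<partial>M) = 1" by (simp add: emeasure_space_1)
  have one_int': "(\<integral>\<^sup>+\<omega>. (1::ennreal) \<partial>M) = 1" by (simp add: emeasure_space_1)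
  have g_rec: "g (Suc m) + g m * \<alpha> * (1/2) = 1" if m: "m \<ge> 1" for m
  proof -
    have H: "(\<integral>\<^sup>+\<omega>. ennreal (exp (- \<mu> * W (Suc m) \<omega>)) \<partial>M) + (\<integral>\<^sup>+\<omega>. ennreal (exp (- \<mu> * W m \<omega>)) \<partial>M) * ennreal \<alpha> * ennreal (1/2) = (\<integral>\<^sup>+\<omega>. ennreal 1 \<partial>M)"
      using S2[OF m c1 c1p] by (simp only: mult_1)
    have "ennreal (g (Suc m)) + ennreal (g m) * ennreal \<alpha> * ennreal (1/2) = ennreal 1"
      using H by (simp only: g_nn[OF m] g_nn[of "Suc m"] one_int one_int' ennreal_1 m le_SucI)
    then show ?thesis by (rule e_sum[rotated 5]) (use g_nonneg al in auto)
  qed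
  have g12: "g 2 = g 1"
  proof -
    have "(\<integral>\<^sup>+\<omega>. ennreal (exp (- \<mu> * W 2 \<omega>)) \<partial>M) = (\<integral>\<^sup>+\<omega>. ennreal (exp (- \<mu> * W 1 \<omega>)) \<partial>M)"
      by (rule stat12[where h="\<lambda>x. ennreal (exp (- \<mu> * x))"]) measurable
    then have "ennreal (g 2) = ennreal (g 1)" by (simp only: g_nn one)
    then show ?thesis using g_nonneg by (simp add: ennreal_inj)
  qed
  have G1: "g 1 = G"
  proof -
    have "g 2 + g 1 * \<alpha> * (1/2) = 1" using g_rec[OF one] by (simp only: Suc_1)
    then have "g 1 * (2 + \<alpha>) = 2" using g12 by (simp add: algebra_simps)
    then show ?thesis unfolding G_def using ne2 by (simp add: field_simps)
  qed
  have gG: "g m = G" if "m \<ge> 1" for m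
    using that
  proof (induction m rule: dec_induct)
    case base then show ?case by (rule G1)
  next
    case (step n)
    have "g (Suc n) = 1 - g n * \<alpha> * (1/2)" using g_rec[OF step(1)] by simp
    also have "\<dots> = G" using step(3) Gf by (simp add: algebra_simps)
    finally show ?case .
  qed
  define E where "E = G * \<alpha> / \<mu>"
  have E0: "E \<ge> 0" unfolding E_def using G0 al mu by simp
  have Wsuc_nn: "(\<integral>\<^sup>+\<omega>. ennreal (W (Suc n) \<omega>) \<partial>M) = ennreal E" if n: "n \<ge> 1" for n
  proof -
    have "(\<integral>\<^sup>+\<omega>. ennreal (W (Suc n) \<omega>) \<partial>M) = (\<integral>\<^sup>+\<omega>. ennreal (exp (- \<mu> * W n \<omega>)) \<partial>M) * ennreal \<alpha> * ennreal (1 / \<mu>)"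
      using S1[OF n c1 c1p] by (simp only: mult_1)
    also have "\<dots> = ennreal (g n * \<alpha> * (1 / \<mu>))"
      using g_nn[OF n] g_nonneg al mu by (simp add: e_prod3)
    also have "\<dots> = ennreal E" using gG[OF n] unfolding E_def by simp
    finally show ?thesis .
  qed
  have W_nn: "(\<integral>\<^sup>+\<omega>. ennreal (W m \<omega>) \<partial>M) = ennreal E" if m: "m \<ge> 1" for m
  proof (cases "m = 1")
    case True
    have "(\<integral>\<^sup>+\<omega>. ennreal (W 2 \<omega>) \<partial>M) = (\<integral>\<^sup>+\<omega>. ennreal (W 1 \<omega>) \<partial>M)"
      by (rule stat12[where h="\<lambda>x. ennreal x"]) measurable
    then show ?thesis using Wsuc_nn[OF one, unfolded Suc_1] True by metis
  next
    case False
    then obtain n where "m = Suc n" "n \<ge> 1" using m by (cases m) auto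
    then show ?thesis using Wsuc_nn by simp
  qed
  have W_int: "integrable M (W m)" "integral\<^sup>L M (W m) = E" if m: "m \<ge> 1" for m
    using W_nn[OF m] nn_integral_eq_integrable[of "W m" M E] W_nonneg[OF m] E0 by auto
  have W1_int: "integrable M W1" "integral\<^sup>L M W1 = E" using W_int[OF one] W1eq by auto
  define a where "a m = (\<integral>\<omega>. max 0 (W1 \<omega>) * exp (- \<mu> * W m \<omega>) \<partial>M)" for m
  have a_int: "integrable M (\<lambda>\<omega>. max 0 (W1 \<omega>) * exp (- \<mu> * W m \<omega>))" if m: "m \<ge> 1" for m
  proof (rule Bochner_Integration.integrable_bound[OF W1_int(1)])
    show "AE x in M. norm (max 0 (W1 x) * exp (- \<mu> * W m x)) \<le> norm (W1 x)"
      using W_nonneg[OF m] W1_nonneg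
    proof eventually_elim
      case (elim x)
      have "exp (- \<mu> * W m x) \<le> 1" using elim mu by simp
      then show ?case using elim by (simp add: mult_left_le)
    qed
  qed measurable
  have a_nn: "(\<integral>\<^sup>+\<omega>. ennreal (max 0 (W1 \<omega>) * exp (- \<mu> * W m \<omega>)) \<partial>M) = ennreal (a m)" if "m \<ge> 1" for m
    unfolding a_def using a_int[OF that] by (intro nn_integral_eq_integral) auto
  have a_nonneg: "a m \<ge> 0" for m unfolding a_def by (intro integral_nonneg_AE) auto
  have W1max_nn: "(\<integral>\<^sup>+\<omega>. ennreal (max 0 (W1 \<omega>)) \<partial>M) = ennreal E"
    using W_nn[OF one] W1eq by (simp add: ennreal_max_0)
  have a_rec: "a (Suc m) + a m * \<alpha> * (1/2) = E" if m: "m \<ge> 1" for m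
  proof -
    have H: "(\<integral>\<^sup>+\<omega>. ennreal (max 0 (W1 \<omega>) * exp (- \<mu> * W (Suc m) \<omega>)) \<partial>M) + (\<integral>\<^sup>+\<omega>. ennreal (max 0 (W1 \<omega>) * exp (- \<mu> * W m \<omega>)) \<partial>M) * ennreal \<alpha> * ennreal (1/2) = (\<integral>\<^sup>+\<omega>. ennreal (max 0 (W1 \<omega>)) \<partial>M)"
      by (rule S2[OF m cmax cmaxp])
    have "ennreal (a (Suc m)) + ennreal (a m) * ennreal \<alpha> * ennreal (1/2) = ennreal E"
      using H by (simp only: a_nn[OF m] a_nn[of "Suc m"] W1max_nn m le_SucI)
    then show ?thesis by (rule e_sum[rotated 5]) (use a_nonneg al E0 in auto)
  qed
  have a1: "a 1 = G * \<alpha> * (1 / (4 * \<mu>))"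
  proof -
    have "(\<integral>\<^sup>+\<omega>. ennreal (W 2 \<omega> * exp (- \<mu> * W 2 \<omega>)) \<partial>M) = (\<integral>\<^sup>+\<omega>. ennreal (W 1 \<omega> * exp (- \<mu> * W 1 \<omega>)) \<partial>M)"
      by (rule stat12[where h="\<lambda>x. ennreal (x * exp (- \<mu> * x))"]) measurable
    moreover have "(\<integral>\<^sup>+\<omega>. ennreal (W 2 \<omega> * exp (- \<mu> * W 2 \<omega>)) \<partial>M) = (\<integral>\<^sup>+\<omega>. ennreal (exp (- \<mu> * W 1 \<omega>)) \<partial>M) * ennreal \<alpha> * ennreal (1 / (4 * \<mu>))"
      using S3[OF one c1 c1p] by (simp only: mult_1 Suc_1)
    moreover have "(\<integral>\<^sup>+\<omega>. ennreal (W 1 \<omega> * exp (- \<mu> * W 1 \<omega>)) \<partial>M) = ennreal (a 1)"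
    proof -
      have "(\<integral>\<^sup>+\<omega>. ennreal (W 1 \<omega> * exp (- \<mu> * W 1 \<omega>)) \<partial>M) = (\<integral>\<^sup>+\<omega>. ennreal (max 0 (W1 \<omega>) * exp (- \<mu> * W 1 \<omega>)) \<partial>M)"
        using W1_nonneg by (intro nn_integral_cong_AE) (auto simp: W1eq elim!: eventually_mono)
      then show ?thesis using a_nn[OF one] by simp
    qed
    ultimately have "ennreal (a 1) = ennreal (g 1 * \<alpha> * (1 / (4 * \<mu>)))"
      using g_nn[OF one] g_nonneg al mu by (simp add: e_prod3)
    then show ?thesis using G1 a_nonneg g_nonneg al mu by (simp add: ennreal_inj)
  qed
  have a_closed: "a m = E * G + (- \<alpha> / 2) ^ (m - 1) * (a 1 - E * G)" if "m \<ge> 1" for m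
    using that
  proof (induction m rule: dec_induct)
    case base then show ?case by simp
  next
    case (step n)
    obtain j where n: "n = Suc j" using step(1) by (cases n) auto
    have "a (Suc n) = E - a n * \<alpha> * (1/2)" using a_rec[OF step(1)] by simp
    also have "\<dots> = E - (E * G + (- \<alpha> / 2) ^ j * (a 1 - E * G)) * \<alpha> * (1/2)"
      using step(3) n by simp
    also have "\<dots> = E * G + (- \<alpha> / 2) ^ (Suc n - 1) * (a 1 - E * G)"
    proof -
      define y where "y = (- \<alpha> / 2) ^ j"
      have "E * G + E * G * \<alpha> / 2 = E * (G * (2 + \<alpha>)) / 2" by (simp add: field_simps)
      then have eE: "E - E * G * \<alpha> / 2 = E * G" using Gf by simp
      have "E - (E * G + y * (a 1 - E * G)) * \<alpha> * (1/2) = (E - E * G * \<alpha> / 2) + (- \<alpha> / 2) * y * (a 1 - E * G)"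
        by (simp add: field_simps)
      also have "\<dots> = E * G + (- \<alpha> / 2) * y * (a 1 - E * G)" by (simp only: eE)
      also have "(- \<alpha> / 2) * y = (- \<alpha> / 2) ^ (Suc n - 1)" unfolding y_def n by simp
      finally show ?thesis unfolding y_def .
    qed
    finally show ?case .
  qed
  obtain j where kj: "k = Suc j" using k by (cases k) auto
  have b_nn: "(\<integral>\<^sup>+\<omega>. ennreal (max 0 (W1 \<omega>) * W (Suc k) \<omega>) \<partial>M) = ennreal (a k * \<alpha> * (1 / \<mu>))"
  proof -
    have "(\<integral>\<^sup>+\<omega>. ennreal (max 0 (W1 \<omega>) * W (Suc k) \<omega>) \<partial>M) = (\<integral>\<^sup>+\<omega>. ennreal (max 0 (W1 \<omega>) * exp (- \<mu> * W k \<omega>)) \<partial>M) * ennreal \<alpha> * ennreal (1 / \<mu>)"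
      by (rule S1[OF k cmax cmaxp])
    also have "\<dots> = ennreal (a k * \<alpha> * (1 / \<mu>))"
      using a_nn[OF k] a_nonneg al mu by (simp add: e_prod3)
    finally show ?thesis .
  qed
  have b0: "0 \<le> a k * \<alpha> * (1 / \<mu>)" using a_nonneg al mu by simp
  have bmax: "integrable M (\<lambda>\<omega>. max 0 (W1 \<omega>) * W (Suc k) \<omega>)" "(\<integral>\<omega>. max 0 (W1 \<omega>) * W (Suc k) \<omega> \<partial>M) = a k * \<alpha> * (1 / \<mu>)"
    using nn_integral_eq_integrable[of "\<lambda>\<omega>. max 0 (W1 \<omega>) * W (Suc k) \<omega>" M "a k * \<alpha> * (1 / \<mu>)"] b_nn b0
      W_Suc_nonneg[OF k] by auto
  have AEeq: "AE \<omega> in M. max 0 (W1 \<omega>) * W (Suc k) \<omega> = W 1 \<omega> * W (Suc k) \<omega>"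
    using W1_nonneg by (auto simp: W1eq elim!: eventually_mono)
  have b_int: "integrable M (\<lambda>\<omega>. W 1 \<omega> * W (Suc k) \<omega>)"
    using bmax(1) integrable_cong_AE[OF _ _ AEeq] by simp
  have b_val: "(\<integral>\<omega>. W 1 \<omega> * W (Suc k) \<omega> \<partial>M) = a k * \<alpha> * (1 / \<mu>)"
    using bmax(2) integral_cong_AE[OF _ _ AEeq] by simp
  have "covariance M (W 1) (W (1 + k)) = a k * \<alpha> * (1 / \<mu>) - E * E"
    using cov_exp[OF W_int(1)[OF one] W_int(1)[of "Suc k"] b_int] b_val W_int(2)[OF one] W_int(2)[of "Suc k"]
    by simp
  also have "\<dots> = (2 * \<alpha> / (2 + \<alpha>)) * (3 / 2 - 2 * \<alpha> / (2 + \<alpha>)) * (1 / \<mu>^2) * (- \<alpha> / 2) ^ k"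
  proof -
    have ak: "a k = E * G + (- \<alpha> / 2) ^ j * (a 1 - E * G)" using a_closed[OF k] kj by simp
    define x where "x = (- \<alpha> / 2) ^ j"
    have pk: "(- \<alpha> / 2) ^ k = (- \<alpha> / 2) * x" unfolding x_def kj by simp
    have ne: "2 + \<alpha> \<noteq> 0" "\<mu> \<noteq> 0" using ne2 mu by auto
    show ?thesis unfolding ak pk x_def[symmetric] a1 E_def G_def
      by (rule fin_alg[OF ne(1) ne(2)])
  qed
  finally show ?thesis .
qed

end

theorem corollary3p5:
  fixes M :: "'a measure" and A B :: "nat \<Rightarrow> 'a \<Rightarrow> real" and W1 :: "'a \<Rightarrow> real"
    and \<mu> :: real
  assumes "prob_space M"
    and "\<mu> > 0"
    and A_rv: "\<And>n. n \<ge> 1 \<Longrightarrow> A n \<in> borel_measurable M"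
    and A_nonneg: "\<And>n. n \<ge> 1 \<Longrightarrow> AE \<omega> in M. A n \<omega> \<ge> 0"
    and A_ident: "\<And>n. n \<ge> 1 \<Longrightarrow> distr M borel (A n) = distr M borel (A 1)"
    and B_exp: "\<And>n. n \<ge> 1 \<Longrightarrow> distributed M lborel (B n) (exponential_density \<mu>)"
    and W1_rv: "W1 \<in> borel_measurable M"
    and W1_nonneg: "AE \<omega> in M. W1 \<omega> \<ge> 0"
    and indep: "prob_space.indep_vars M (\<lambda>_. borel) (driving_family A B W1) driving_index"
    and stat: "stationary_process M (Wseq A B W1)"
    and k: "k \<ge> 1"
  shows "(let \<alpha> = (\<integral>\<omega>. exp (- \<mu> * A 1 \<omega>) \<partial>M) in
          covariance M (Wseq A B W1 1) (Wseq A B W1 (1 + k))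
          = (2 * \<alpha> / (2 + \<alpha>)) * (3 / 2 - 2 * \<alpha> / (2 + \<alpha>)) * (1 / \<mu>^2) * (- \<alpha> / 2) ^ k)"
proof -
  have S: "setting M A B W1 \<mu>"
    using assms(2-10) by (intro setting.intro[OF assms(1)] setting_axioms.intro) assumption+
  interpret setting M A B W1 \<mu> by (rule S)
  show ?thesis unfolding Let_def by (rule main[OF k])
qed

end
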